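(* (Weak progress for $\lambda_{\mathrm{act}}$ configurations.) Let $\cdot ; \cdot \vdash \mathcal{C}$, suppose $\mathcal{C}$ cannot reduce (there is no $\mathcal{C}'$ with $\mathcal{C}\longrightarrow\mathcal{C}'$), and let $\mathcal{C}' = (\nu a_1) \ldots (\nu a_n)(\langle a_1, M_1, \vec V_1\rangle \parallel \ldots \parallel \langle a_n, M_n, \vec V_n\rangle)$ be a canonical form of $\mathcal{C}$. Then each actor with name $a_i$ is either of the form $\langle a_i, \mathbf{return}\ W, \vec V_i\rangle$ for some value $W$, or of the form $\langle a_i, E[\mathbf{receive}], \epsilon\rangle$ for some evaluation context $E$.
   Context: The calculus $\lambda_{\mathrm{act}}$. Types $A,B,C ::= \mathbf{1} \mid A \xrightarrow{C} B \mid \mathsf{ActorRef}(A)$; $\alpha$ ranges over variables and names; values $V,W ::= \alpha \mid \lambda x.M \mid ()$; computations $M,N ::= V\,W \mid \mathbf{let}\ x \Leftarrow M\ \mathbf{in}\ N \mid \mathbf{return}\ V \mid \mathbf{spawn}\ M \mid \mathbf{send}\ V\ W \mid \mathbf{receive} \mid \mathbf{self}$. Value typing: $\Gamma\vdash\alpha:A$ if $\alpha:A\in\Gamma$; $\Gamma\vdash\lambda x.M:A\xrightarrow{C}B$ if $\Gamma,x:A\mid C\vdash M:B$; $\Gamma\vdash():\mathbf 1$. Computation typing $\Gamma\mid C\vdash M:A$: $V\,W:B$ if $\Gamma\vdash V:A\xrightarrow{C}B$, $\Gamma\vdash W:A$; $\Gamma\mid C\vdash\mathbf{let}\ x\Leftarrow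 M\ \mathbf{in}\ N:B$ if $\Gamma\mid C\vdash M:A$, $\Gamma,x:A\mid C\vdash N:B$; $\Gamma\mid C\vdash\mathbf{return}\ V:A$ if $\Gamma\vdash V:A$; $\Gamma\mid C\vdash\mathbf{send}\ V\ W:\mathbf 1$ if $\Gamma\vdash V:A$, $\Gamma\vdash W:\mathsf{ActorRef}(A)$; $\Gamma\mid A\vdash\mathbf{receive}:A$; $\Gamma\mid C\vdash\mathbf{spawn}\ M:\mathsf{ActorRef}(A)$ if $\Gamma\mid A\vdash M:\mathbf 1$; $\Gamma\mid A\vdash\mathbf{self}:\mathsf{ActorRef}(A)$. Evaluation contexts $E ::= [\,]\mid\mathbf{let}\ x\Leftarrow E\ \mathbf{in}\ M$; term reduction: $(\lambda x.M)V\longrightarrow_{\mathsf{M}} M\{V/x\}$, $\mathbf{let}\ x\Leftarrow\mathbf{return}\ V\ \mathbf{in}\ M\longrightarrow_{\mathsf{M}} M\{V/x\}$, $E[M]\longrightarrow_{\mathsf{M}}E[M']$ if $M\longrightarrow_{\mathsf{M}}M'$. Configurations $\mathcal{C},\mathcal{D} ::= \mathcal{C}\parallel\mathcal{D}\mid(\nu a)\mathcal{C}\mid\langle a,M,\vec V\rangle$ (actor named $a$ evaluating $M$ with mailbox $\vec V$; $\epsilon$ empty). Configuration contexts $G ::= [\,]\mid G\parallel\mathcal{C}\mid(\nu a)G$. Configuration typing: (Par) $\Gamma;\Delta_1\vdash\mathcal{C}_1$, $\Gamma;\Delta_2\vdash\mathcal{C}_2$ give $\Gamma;\Delta_1,\Delta_2\vdash\mathcal{C}_1\parallel\mathcal{C}_2$;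 (Pid) $\Gamma,a:\mathsf{ActorRef}(A);\Delta,a:A\vdash\mathcal{C}$ gives $\Gamma;\Delta\vdash(\nu a)\mathcal{C}$; (Actor) $\Gamma,a:\mathsf{ActorRef}(A)\mid A\vdash M:\mathbf 1$ and $\Gamma,a:\mathsf{ActorRef}(A)\vdash V_i:A$ for all $i$ give $\Gamma,a:\mathsf{ActorRef}(A);a:A\vdash\langle a,M,\vec V\rangle$. Structural congruence $\equiv$: least congruence closed under $G[-]$ with commutativity/associativity of $\parallel$ and $\mathcal{C}\parallel(\nu a)\mathcal{D}\equiv(\nu a)(\mathcal{C}\parallel\mathcal{D})$ if $a\notin\mathsf{fv}(\mathcal{C})$. Reduction $\longrightarrow$ (modulo $\equiv$): $\langle a,E[\mathbf{spawn}\ M],\vec V\rangle\longrightarrow(\nu b)(\langle a,E[\mathbf{return}\ b],\vec V\rangle\parallel\langle b,M,\epsilon\rangle)$, $b$ fresh; $\langle a,E[\mathbf{send}\ V'\ b],\vec V\rangle\parallel\langle b,M,\vec W\rangle\longrightarrow\langle a,E[\mathbf{return}\ ()],\vec V\rangle\parallel\langle b,M,\vec W\cdot V'\rangle$; $\langle a,E[\mathbf{send}\ V'\ a],\vec V\rangle\longrightarrow\langle a,E[\mathbf{return}\ ()],\vec V\cdot V'\rangle$; $\langle a,E[\mathbf{self}],\vec V\rangle\longrightarrow\langle a,E[\mathbf{return}\ a],\vec V\rangle$; $\langle a,E[\mathbf{receive}],W\cdot\vec V\rangle\longrightarrow\langle a,E[\mathbf{return}\ W],\vec V\rangle$; $G[\mathcal{C}_1]\longrightarrow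 G[\mathcal{C}_2]$ if $\mathcal{C}_1\longrightarrow\mathcal{C}_2$; $\langle a,M_1,\vec V\rangle\longrightarrow\langle a,M_2,\vec V\rangle$ if $M_1\longrightarrow_{\mathsf{M}}M_2$. A canonical form of $\mathcal{C}$ is a configuration $\mathcal{C}'\equiv\mathcal{C}$ of the form $(\nu a_1) \ldots (\nu a_n)(\langle a_1, M_1, \vec V_1\rangle \parallel \ldots \parallel \langle a_n, M_n, \vec V_n\rangle)$. *)

theory Defs
  imports Main
begin

text \<open>Locally nameless representation of lambda_act. Atoms (variables and
actor names share one namespace, as in the paper) are natural numbers;
binders of lambda and let are de Bruijn indices.\<close>

type_synonym atom = nat

datatype ty = TUnit | TFun ty ty ty | ActorRef ty
  \<comment> \<open>TFun A C B is the type A -C-> B\<close>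

datatype val = BVar nat | FVar atom | Lam comp | UnitV
     and comp = App val val | Let comp comp | Return val | Spawn comp
              | Send val val | Receive | Self

primrec open_val :: "nat \<Rightarrow> val \<Rightarrow> val \<Rightarrow> val"
    and open_comp :: "nat \<Rightarrow> val \<Rightarrow> comp \<Rightarrow> comp" where
  "open_val k u (BVar i) = (if i = k then u else BVar i)"
| "open_val k u (FVar x) = FVar x"
| "open_val k u (Lam M) = Lam (open_comp (Suc k) u M)"
| "open_val k u UnitV = UnitV"
| "open_comp k u (App V W) = App (open_val k u V) (open_val k u W)"
| "open_comp k u (Let M N) = Let (open_comp k u M) (open_comp (Suc k) u N)"
| "open_comp k u (Return V) = Return (open_val k u V)"
| "open_comp k u (Spawn M) = Spawn (open_comp k u M)"
| "open_comp k u (Send V W) = Send (open_val k u V) (open_val k u W)"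
| "open_comp k u Receive = Receive"
| "open_comp k u Self = Self"

definition inst :: "comp \<Rightarrow> val \<Rightarrow> comp" where
  "inst M V = open_comp 0 V M"

primrec fv_val :: "val \<Rightarrow> atom set" and fv_comp :: "comp \<Rightarrow> atom set" where
  "fv_val (BVar i) = {}"
| "fv_val (FVar x) = {x}"
| "fv_val (Lam M) = fv_comp M"
| "fv_val UnitV = {}"
| "fv_comp (App V W) = fv_val V \<union> fv_val W"
| "fv_comp (Let M N) = fv_comp M \<union> fv_comp N"
| "fv_comp (Return V) = fv_val V"
| "fv_comp (Spawn M) = fv_comp M"
| "fv_comp (Send V W) = fv_val V \<union> fv_val W"
| "fv_comp Receive = {}"
| "fv_comp Self = {}"

definition swap_atom :: "atom \<Rightarrow> atom \<Rightarrow> atom \<Rightarrow> atom" where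
  "swap_atom a b x = (if x = a then b else if x = b then a else x)"

primrec swap_val :: "atom \<Rightarrow> atom \<Rightarrow> val \<Rightarrow> val"
    and swap_comp :: "atom \<Rightarrow> atom \<Rightarrow> comp \<Rightarrow> comp" where
  "swap_val a b (BVar i) = BVar i"
| "swap_val a b (FVar x) = FVar (swap_atom a b x)"
| "swap_val a b (Lam M) = Lam (swap_comp a b M)"
| "swap_val a b UnitV = UnitV"
| "swap_comp a b (App V W) = App (swap_val a b V) (swap_val a b W)"
| "swap_comp a b (Let M N) = Let (swap_comp a b M) (swap_comp a b N)"
| "swap_comp a b (Return V) = Return (swap_val a b V)"
| "swap_comp a b (Spawn M) = Spawn (swap_comp a b M)"
| "swap_comp a b (Send V W) = Send (swap_val a b V) (swap_val a b W)"
| "swap_comp a b Receive = Receive"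
| "swap_comp a b Self = Self"

datatype ectx = Hole | ELet ectx comp

primrec plug :: "ectx \<Rightarrow> comp \<Rightarrow> comp" where
  "plug Hole M = M"
| "plug (ELet E N) M = Let (plug E M) N"

datatype conf = Par conf conf | Nu atom conf | Actor atom comp "val list"

primrec fn_conf :: "conf \<Rightarrow> atom set" where
  "fn_conf (Par C D) = fn_conf C \<union> fn_conf D"
| "fn_conf (Nu a C) = fn_conf C - {a}"
| "fn_conf (Actor a M Vs) = {a} \<union> fv_comp M \<union> (\<Union>V\<in>set Vs. fv_val V)"

primrec swap_conf :: "atom \<Rightarrow> atom \<Rightarrow> conf \<Rightarrow> conf" where
  "swap_conf a b (Par C D) = Par (swap_conf a b C) (swap_conf a b D)"
| "swap_conf a b (Nu c C) = Nu (swap_atom a b c) (swap_conf a b C)"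
| "swap_conf a b (Actor c M Vs) = Actor (swap_atom a b c) (swap_comp a b M) (map (swap_val a b) Vs)"

inductive vtyp :: "(atom \<rightharpoonup> ty) \<Rightarrow> val \<Rightarrow> ty \<Rightarrow> bool"
      and ctyp :: "(atom \<rightharpoonup> ty) \<Rightarrow> ty \<Rightarrow> comp \<Rightarrow> ty \<Rightarrow> bool" where
  T_Var: "\<Gamma> x = Some A \<Longrightarrow> vtyp \<Gamma> (FVar x) A"
| T_Lam: "finite L \<Longrightarrow> (\<forall>x. x \<notin> L \<longrightarrow> ctyp (\<Gamma>(x \<mapsto> A)) C (inst M (FVar x)) B)
          \<Longrightarrow> vtyp \<Gamma> (Lam M) (TFun A C B)"
| T_Unit: "vtyp \<Gamma> UnitV TUnit"
| T_App: "vtyp \<Gamma> V (TFun A C B) \<Longrightarrow> vtyp \<Gamma> W A \<Longrightarrow> ctyp \<Gamma> C (App V W) B"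
| T_Let: "ctyp \<Gamma> C M A \<Longrightarrow> finite L
          \<Longrightarrow> (\<forall>x. x \<notin> L \<longrightarrow> ctyp (\<Gamma>(x \<mapsto> A)) C (inst N (FVar x)) B)
          \<Longrightarrow> ctyp \<Gamma> C (Let M N) B"
| T_Return: "vtyp \<Gamma> V A \<Longrightarrow> ctyp \<Gamma> C (Return V) A"
| T_Send: "vtyp \<Gamma> V A \<Longrightarrow> vtyp \<Gamma> W (ActorRef A) \<Longrightarrow> ctyp \<Gamma> C (Send V W) TUnit"
| T_Receive: "ctyp \<Gamma> A Receive A"
| T_Spawn: "ctyp \<Gamma> A M TUnit \<Longrightarrow> ctyp \<Gamma> C (Spawn M) (ActorRef A)"
| T_Self: "ctyp \<Gamma> A Self (ActorRef A)"

inductive cfgtyp :: "(atom \<rightharpoonup> ty) \<Rightarrow> (atom \<rightharpoonup> ty) \<Rightarrow> conf \<Rightarrow> bool" where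
  T_Par: "cfgtyp \<Gamma> \<Delta>1 C1 \<Longrightarrow> cfgtyp \<Gamma> \<Delta>2 C2 \<Longrightarrow> dom \<Delta>1 \<inter> dom \<Delta>2 = {}
          \<Longrightarrow> cfgtyp \<Gamma> (\<Delta>1 ++ \<Delta>2) (Par C1 C2)"
| T_Pid: "cfgtyp (\<Gamma>(a \<mapsto> ActorRef A)) (\<Delta>(a \<mapsto> A)) C \<Longrightarrow> a \<notin> dom \<Delta>
          \<Longrightarrow> cfgtyp \<Gamma> \<Delta> (Nu a C)"
| T_Actor: "\<Gamma> a = Some (ActorRef A) \<Longrightarrow> ctyp \<Gamma> A M TUnit
          \<Longrightarrow> (\<forall>V\<in>set Vs. vtyp \<Gamma> V A)
          \<Longrightarrow> cfgtyp \<Gamma> [a \<mapsto> A] (Actor a M Vs)"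

inductive mred :: "comp \<Rightarrow> comp \<Rightarrow> bool" where
  M_Beta: "mred (App (Lam M) V) (inst M V)"
| M_Let: "mred (Let (Return V) M) (inst M V)"
| M_Ctx: "mred M M' \<Longrightarrow> mred (plug E M) (plug E M')"

text \<open>Structural congruence: least congruence (w.r.t. configuration contexts G)
containing commutativity/associativity of Par, scope extrusion, and
alpha-conversion of nu-binders (implicit in the paper).\<close>
inductive scong :: "conf \<Rightarrow> conf \<Rightarrow> bool" where
  S_refl: "scong C C"
| S_sym: "scong C D \<Longrightarrow> scong D C"
| S_trans: "scong C D \<Longrightarrow> scong D E \<Longrightarrow> scong C E"
| S_ParCtx: "scong C D \<Longrightarrow> scong (Par C E) (Par D E)"
| S_NuCtx: "scong C D \<Longrightarrow> scong (Nu a C) (Nu a D)"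
| S_comm: "scong (Par C D) (Par D C)"
| S_assoc: "scong (Par C (Par D E)) (Par (Par C D) E)"
| S_extr: "a \<notin> fn_conf C \<Longrightarrow> scong (Par C (Nu a D)) (Nu a (Par C D))"
| S_alpha: "b \<notin> fn_conf (Nu a C) \<Longrightarrow> scong (Nu a C) (Nu b (swap_conf a b C))"

inductive red :: "conf \<Rightarrow> conf \<Rightarrow> bool" where
  R_Spawn: "b \<noteq> a \<Longrightarrow> b \<notin> fv_comp (plug E (Spawn M)) \<Longrightarrow> b \<notin> (\<Union>V\<in>set Vs. fv_val V)
    \<Longrightarrow> red (Actor a (plug E (Spawn M)) Vs)
            (Nu b (Par (Actor a (plug E (Return (FVar b))) Vs) (Actor b M [])))"
| R_Send: "red (Par (Actor a (plug E (Send V' (FVar b))) Vs) (Actor b M Ws))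
              (Par (Actor a (plug E (Return UnitV)) Vs) (Actor b M (Ws @ [V'])))"
| R_SendSelf: "red (Actor a (plug E (Send V' (FVar a))) Vs)
                   (Actor a (plug E (Return UnitV)) (Vs @ [V']))"
| R_Self: "red (Actor a (plug E Self) Vs) (Actor a (plug E (Return (FVar a))) Vs)"
| R_Receive: "red (Actor a (plug E Receive) (W # Vs)) (Actor a (plug E (Return W)) Vs)"
| R_ParCtx: "red C1 C2 \<Longrightarrow> red (Par C1 D) (Par C2 D)"
| R_NuCtx: "red C1 C2 \<Longrightarrow> red (Nu a C1) (Nu a C2)"
| R_Term: "mred M1 M2 \<Longrightarrow> red (Actor a M1 Vs) (Actor a M2 Vs)"
| R_Cong: "scong C C1 \<Longrightarrow> red C1 C2 \<Longrightarrow> scong C2 D \<Longrightarrow> red C D"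

fun par_actors :: "(atom \<times> comp \<times> val list) list \<Rightarrow> conf" where
  "par_actors [] = undefined"
| "par_actors [(a, M, Vs)] = Actor a M Vs"
| "par_actors ((a, M, Vs) # xs) = Par (Actor a M Vs) (par_actors xs)"

fun nu_list :: "atom list \<Rightarrow> conf \<Rightarrow> conf" where
  "nu_list [] C = C"
| "nu_list (a # as) C = Nu a (nu_list as C)"

text \<open>(nu a1)...(nu an)(<a1,M1,V1> || ... || <an,Mn,Vn>), n \<ge> 1\<close>
definition canonical_conf :: "(atom \<times> comp \<times> val list) list \<Rightarrow> conf" where
  "canonical_conf acts = nu_list (map fst acts) (par_actors acts)"

end

theory Submission
  imports Defs
begin

lemma fv_finite: "finite (fv_val V)" "finite (fv_comp M)"
  by (induct V and M) auto

lemma fv_open: "fv_val (open_val k u V) \<subseteq> fv_val V \<union> fv_val u"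
  "fv_comp (open_comp k u M) \<subseteq> fv_comp M \<union> fv_val u"
  by (induct V and M arbitrary: k and k) (auto split: if_splits)

lemma fv_inst: "fv_comp (inst M (FVar y)) \<subseteq> fv_comp M \<union> {y}"
  using fv_open(2)[of 0 "FVar y" M] by (simp add: inst_def)

lemma swap_open: "swap_val a b (open_val k u V) = open_val k (swap_val a b u) (swap_val a b V)"
  "swap_comp a b (open_comp k u M) = open_comp k (swap_val a b u) (swap_comp a b M)"
  by (induct V and M arbitrary: k and k) auto

lemma swap_inst: "swap_comp a b (inst M (FVar y)) = inst (swap_comp a b M) (FVar (swap_atom a b y))"
  by (simp add: inst_def swap_open)

lemma swap_atom_inv[simp]: "swap_atom a b (swap_atom a b x) = x"
  by (simp add: swap_atom_def)

lemma swap_atom_eq_iff[simp]: "(swap_atom a b x = swap_atom a b y) = (x = y)"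
  by (auto simp: swap_atom_def)

lemma swap_atom_sym: "swap_atom a b = swap_atom b a"
  by (auto simp: swap_atom_def fun_eq_iff)

lemma swap_atom_same[simp]: "swap_atom a a x = x"
  by (simp add: swap_atom_def)

lemma swap_vc_same: "swap_val a a V = V" "swap_comp a a M = M"
  by (induct V and M) auto

lemma swap_conf_same[simp]: "swap_conf a a C = C"
  by (induct C) (auto simp: swap_vc_same map_idI)

lemma swap_vc_inv: "swap_val a b (swap_val a b V) = V" "swap_comp a b (swap_comp a b M) = M"
  by (induct V and M) auto

lemma swap_vc_sym: "swap_val a b V = swap_val b a V" "swap_comp a b M = swap_comp b a M"
  by (induct V and M) (auto simp: swap_atom_sym)

lemma swap_conf_inv[simp]: "swap_conf a b (swap_conf a b C) = C"
  by (induct C) (auto simp: swap_vc_inv comp_def map_idI)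

lemma swap_conf_sym: "swap_conf a b C = swap_conf b a C"
  by (induct C) (auto simp: swap_vc_sym swap_atom_sym)

lemma fv_swap: "fv_val (swap_val a b V) = swap_atom a b ` fv_val V"
  "fv_comp (swap_comp a b M) = swap_atom a b ` fv_comp M"
  by (induct V and M) (auto simp: image_Un)

lemma fn_swap: "fn_conf (swap_conf a b C) = swap_atom a b ` fn_conf C"
proof (induct C)
  case (Nu c C)
  have "inj (swap_atom a b)" by (auto intro: injI)
  then show ?case using Nu by (simp add: image_set_diff)
qed (auto simp: fv_swap image_Un image_UN)


lemma typ_agree:
  "vtyp \<Gamma> V T \<Longrightarrow> (\<And>\<Gamma>'. (\<forall>x\<in>fv_val V. \<Gamma>' x = \<Gamma> x) \<Longrightarrow> vtyp \<Gamma>' V T)"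
  "ctyp \<Gamma> C M T \<Longrightarrow> (\<And>\<Gamma>'. (\<forall>x\<in>fv_comp M. \<Gamma>' x = \<Gamma> x) \<Longrightarrow> ctyp \<Gamma>' C M T)"
proof (induct rule: vtyp_ctyp.inducts)
  case (T_Var \<Gamma> x A)
  then show ?case by (auto intro: vtyp_ctyp.intros)
next
  case (T_Lam L \<Gamma> A C M B)
  show ?case
  proof (rule vtyp_ctyp.T_Lam[where L="L \<union> fv_comp M"])
    show "finite (L \<union> fv_comp M)" using T_Lam by (simp add: fv_finite)
    show "\<forall>x. x \<notin> L \<union> fv_comp M \<longrightarrow> ctyp (\<Gamma>'(x \<mapsto> A)) C (inst M (FVar x)) B"
    proof (intro allI impI)
      fix x assume x: "x \<notin> L \<union> fv_comp M"
      have "\<forall>y\<in>fv_comp (inst M (FVar x)). (\<Gamma>'(x \<mapsto> A)) y = (\<Gamma>(x \<mapsto> A)) y"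
        using fv_inst[of M x] T_Lam.prems by auto
      then show "ctyp (\<Gamma>'(x \<mapsto> A)) C (inst M (FVar x)) B" using T_Lam x by blast
    qed
  qed
next
  case (T_Unit \<Gamma>)
  then show ?case by (auto intro: vtyp_ctyp.intros)
next
  case (T_App \<Gamma> V A C B W)
  then show ?case by (auto intro: vtyp_ctyp.intros)
next
  case (T_Let \<Gamma> C M A L N B)
  show ?case
  proof (rule vtyp_ctyp.T_Let[where L="L \<union> fv_comp N"])
    show "ctyp \<Gamma>' C M A" using T_Let by auto
    show "finite (L \<union> fv_comp N)" using T_Let by (simp add: fv_finite)
    show "\<forall>x. x \<notin> L \<union> fv_comp N \<longrightarrow> ctyp (\<Gamma>'(x \<mapsto> A)) C (inst N (FVar x)) B"
    proof (intro allI impI)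
      fix x assume x: "x \<notin> L \<union> fv_comp N"
      have "\<forall>y\<in>fv_comp (inst N (FVar x)). (\<Gamma>'(x \<mapsto> A)) y = (\<Gamma>(x \<mapsto> A)) y"
        using fv_inst[of N x] T_Let.prems by auto
      then show "ctyp (\<Gamma>'(x \<mapsto> A)) C (inst N (FVar x)) B" using T_Let x by blast
    qed
  qed
next
  case (T_Return \<Gamma> V A C)
  then show ?case by (auto intro: vtyp_ctyp.intros)
next
  case (T_Send \<Gamma> V A W C)
  then show ?case by (auto intro: vtyp_ctyp.intros)
qed (auto intro: vtyp_ctyp.intros)

lemma upd_swap: "(\<Gamma>(x \<mapsto> A)) \<circ> swap_atom a b = (\<Gamma> \<circ> swap_atom a b)(swap_atom a b x \<mapsto> A)"
  by (auto simp: fun_eq_iff)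

lemma typ_swap:
  "vtyp \<Gamma> V T \<Longrightarrow> vtyp (\<Gamma> \<circ> swap_atom a b) (swap_val a b V) T"
  "ctyp \<Gamma> C M T \<Longrightarrow> ctyp (\<Gamma> \<circ> swap_atom a b) C (swap_comp a b M) T"
proof (induct rule: vtyp_ctyp.inducts)
  case (T_Lam L \<Gamma> A C M B)
  have "vtyp (\<Gamma> \<circ> swap_atom a b) (Lam (swap_comp a b M)) (TFun A C B)"
  proof (rule vtyp_ctyp.T_Lam[where L="swap_atom a b ` L"])
    show "finite (swap_atom a b ` L)" using T_Lam by simp
    show "\<forall>x. x \<notin> swap_atom a b ` L \<longrightarrow> ctyp ((\<Gamma> \<circ> swap_atom a b)(x \<mapsto> A)) C (inst (swap_comp a b M) (FVar x)) B"
    proof (intro allI impI)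
      fix x assume x: "x \<notin> swap_atom a b ` L"
      then have "swap_atom a b x \<notin> L" by (metis image_eqI swap_atom_inv)
      then have "ctyp ((\<Gamma>(swap_atom a b x \<mapsto> A)) \<circ> swap_atom a b) C (swap_comp a b (inst M (FVar (swap_atom a b x)))) B"
        using T_Lam by blast
      then show "ctyp ((\<Gamma> \<circ> swap_atom a b)(x \<mapsto> A)) C (inst (swap_comp a b M) (FVar x)) B"
        by (simp add: upd_swap swap_inst)
    qed
  qed
  then show ?case by (simp add: comp_def)
next
  case (T_Let \<Gamma> C M A L N B)
  have "ctyp (\<Gamma> \<circ> swap_atom a b) C (Let (swap_comp a b M) (swap_comp a b N)) B"
  proof (rule vtyp_ctyp.T_Let[where L="swap_atom a b ` L"])
    show "ctyp (\<Gamma> \<circ> swap_atom a b) C (swap_comp a b M) A" using T_Let by (simp add: comp_def)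
    show "finite (swap_atom a b ` L)" using T_Let by simp
    show "\<forall>x. x \<notin> swap_atom a b ` L \<longrightarrow> ctyp ((\<Gamma> \<circ> swap_atom a b)(x \<mapsto> A)) C (inst (swap_comp a b N) (FVar x)) B"
    proof (intro allI impI)
      fix x assume x: "x \<notin> swap_atom a b ` L"
      then have "swap_atom a b x \<notin> L" by (metis image_eqI swap_atom_inv)
      then have "ctyp ((\<Gamma>(swap_atom a b x \<mapsto> A)) \<circ> swap_atom a b) C (swap_comp a b (inst N (FVar (swap_atom a b x)))) B"
        using T_Let by blast
      then show "ctyp ((\<Gamma> \<circ> swap_atom a b)(x \<mapsto> A)) C (inst (swap_comp a b N) (FVar x)) B"
        by (simp add: upd_swap swap_inst)
    qed
  qed
  then show ?case by (simp add: comp_def)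
qed (auto intro: vtyp_ctyp.intros)


lemma cfg_Par_iff: "cfgtyp \<Gamma> \<Delta> (Par C1 C2) = (\<exists>\<Delta>1 \<Delta>2. \<Delta> = \<Delta>1 ++ \<Delta>2 \<and> dom \<Delta>1 \<inter> dom \<Delta>2 = {}
   \<and> cfgtyp \<Gamma> \<Delta>1 C1 \<and> cfgtyp \<Gamma> \<Delta>2 C2)"
proof
  assume "cfgtyp \<Gamma> \<Delta> (Par C1 C2)"
  then show "\<exists>\<Delta>1 \<Delta>2. \<Delta> = \<Delta>1 ++ \<Delta>2 \<and> dom \<Delta>1 \<inter> dom \<Delta>2 = {}
   \<and> cfgtyp \<Gamma> \<Delta>1 C1 \<and> cfgtyp \<Gamma> \<Delta>2 C2" by (cases rule: cfgtyp.cases) auto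
qed (auto intro: cfgtyp.intros)

lemma cfg_Nu_iff: "cfgtyp \<Gamma> \<Delta> (Nu a C) = (\<exists>A. a \<notin> dom \<Delta> \<and> cfgtyp (\<Gamma>(a \<mapsto> ActorRef A)) (\<Delta>(a \<mapsto> A)) C)"
proof
  assume "cfgtyp \<Gamma> \<Delta> (Nu a C)"
  then show "\<exists>A. a \<notin> dom \<Delta> \<and> cfgtyp (\<Gamma>(a \<mapsto> ActorRef A)) (\<Delta>(a \<mapsto> A)) C"
    by (cases rule: cfgtyp.cases) auto
qed (auto intro: cfgtyp.intros)

lemma cfg_Actor_iff: "cfgtyp \<Gamma> \<Delta> (Actor a M Vs) = (\<exists>A. \<Delta> = [a \<mapsto> A] \<and> \<Gamma> a = Some (ActorRef A)
   \<and> ctyp \<Gamma> A M TUnit \<and> (\<forall>V\<in>set Vs. vtyp \<Gamma> V A))"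
proof
  assume "cfgtyp \<Gamma> \<Delta> (Actor a M Vs)"
  then show "\<exists>A. \<Delta> = [a \<mapsto> A] \<and> \<Gamma> a = Some (ActorRef A)
   \<and> ctyp \<Gamma> A M TUnit \<and> (\<forall>V\<in>set Vs. vtyp \<Gamma> V A)"
    by (cases rule: cfgtyp.cases) auto
qed (auto intro: cfgtyp.intros)

lemma cfg_dom: "cfgtyp \<Gamma> \<Delta> C \<Longrightarrow> dom \<Delta> \<subseteq> fn_conf C"
proof (induct rule: cfgtyp.induct)
  case (T_Pid \<Gamma> a A \<Delta> C)
  then show ?case by auto
qed auto

lemma cfg_agree: "cfgtyp \<Gamma> \<Delta> C \<Longrightarrow> (\<forall>x\<in>fn_conf C. \<Gamma>' x = \<Gamma> x) \<Longrightarrow> cfgtyp \<Gamma>' \<Delta> C"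
proof (induct arbitrary: \<Gamma>' rule: cfgtyp.induct)
  case (T_Par \<Gamma> \<Delta>1 C1 \<Delta>2 C2)
  then show ?case by (auto intro: cfgtyp.intros)
next
  case (T_Pid \<Gamma> a A \<Delta> C)
  have "cfgtyp (\<Gamma>'(a \<mapsto> ActorRef A)) (\<Delta>(a \<mapsto> A)) C"
    using T_Pid by (intro T_Pid(2)) auto
  then show ?case using T_Pid(3) by (rule cfgtyp.T_Pid)
next
  case (T_Actor \<Gamma> a A M Vs)
  show ?case
  proof (rule cfgtyp.T_Actor)
    show "\<Gamma>' a = Some (ActorRef A)" using T_Actor by simp
    show "ctyp \<Gamma>' A M TUnit" using T_Actor(2) by (rule typ_agree(2)) (use T_Actor(4) in auto)
    show "\<forall>V\<in>set Vs. vtyp \<Gamma>' V A"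
    proof
      fix V assume "V \<in> set Vs"
      then show "vtyp \<Gamma>' V A" using T_Actor(3,4) by (intro typ_agree(1)[of \<Gamma> V A \<Gamma>']) auto
    qed
  qed
qed

lemma map_add_swap: "(m1 ++ m2) \<circ> f = (m1 \<circ> f) ++ (m2 \<circ> f)"
  by (auto simp: fun_eq_iff map_add_def split: option.splits)

lemma dom_swap: "dom (m \<circ> swap_atom a b) = swap_atom a b ` dom m"
  by (auto simp: dom_def image_iff) (metis swap_atom_inv)

lemma sing_swap: "[x \<mapsto> A] \<circ> swap_atom a b = [swap_atom a b x \<mapsto> A]"
  by (auto simp: fun_eq_iff)

lemma cfg_swap: "cfgtyp \<Gamma> \<Delta> C \<Longrightarrow> cfgtyp (\<Gamma> \<circ> swap_atom a b) (\<Delta> \<circ> swap_atom a b) (swap_conf a b C)"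
proof (induct rule: cfgtyp.induct)
  case (T_Par \<Gamma> \<Delta>1 C1 \<Delta>2 C2)
  have "dom (\<Delta>1 \<circ> swap_atom a b) \<inter> dom (\<Delta>2 \<circ> swap_atom a b) = {}"
    using T_Par(5) by (auto simp: dom_swap)
  from cfgtyp.T_Par[OF T_Par(2) T_Par(4) this] show ?case by (simp add: map_add_swap)
next
  case (T_Pid \<Gamma> a' A \<Delta> C)
  have "swap_atom a b a' \<notin> dom (\<Delta> \<circ> swap_atom a b)" using T_Pid(3) by (simp add: dom_swap inj_image_mem_iff inj_def)
  moreover have "cfgtyp ((\<Gamma> \<circ> swap_atom a b)(swap_atom a b a' \<mapsto> ActorRef A)) ((\<Delta> \<circ> swap_atom a b)(swap_atom a b a' \<mapsto> A)) (swap_conf a b C)"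
    using T_Pid(2) unfolding upd_swap .
  ultimately have "cfgtyp (\<Gamma> \<circ> swap_atom a b) (\<Delta> \<circ> swap_atom a b) (Nu (swap_atom a b a') (swap_conf a b C))"
    by (intro cfgtyp.T_Pid)
  then show ?case by (simp only: swap_conf.simps)
next
  case (T_Actor \<Gamma> a' A M Vs)
  show ?case unfolding sing_swap swap_conf.simps
  proof (rule cfgtyp.T_Actor)
    show "(\<Gamma> \<circ> swap_atom a b) (swap_atom a b a') = Some (ActorRef A)" using T_Actor by simp
    show "ctyp (\<Gamma> \<circ> swap_atom a b) A (swap_comp a b M) TUnit" using T_Actor by (simp add: typ_swap)
    show "\<forall>V\<in>set (map (swap_val a b) Vs). vtyp (\<Gamma> \<circ> swap_atom a b) V A" using T_Actor by (auto simp: typ_swap)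
  qed
qed


lemma alpha_fwd:
  assumes b: "b \<notin> fn_conf (Nu a C)" and t: "cfgtyp \<Gamma> \<Delta> (Nu a C)"
  shows "cfgtyp \<Gamma> \<Delta> (Nu b (swap_conf a b C))"
proof (cases "a = b")
  case True then show ?thesis using t by simp
next
  case False
  from t obtain A where a: "a \<notin> dom \<Delta>" and tc: "cfgtyp (\<Gamma>(a \<mapsto> ActorRef A)) (\<Delta>(a \<mapsto> A)) C"
    by (auto simp: cfg_Nu_iff)
  have domD: "dom \<Delta> \<subseteq> fn_conf (Nu a C)" using cfg_dom[OF tc] a by auto
  have bD: "b \<notin> dom \<Delta>" using b domD by auto
  have bC: "b \<notin> fn_conf C" using b False by auto
  from cfg_swap[OF tc, of a b]
  have t2: "cfgtyp ((\<Gamma> \<circ> swap_atom a b)(b \<mapsto> ActorRef A)) ((\<Delta> \<circ> swap_atom a b)(b \<mapsto> A)) (swap_conf a b C)"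
    by (simp add: upd_swap swap_atom_def)
  have D: "\<Delta> \<circ> swap_atom a b = \<Delta>"
    using a bD by (auto simp: fun_eq_iff swap_atom_def dom_def)
  have agree: "\<forall>x\<in>fn_conf (swap_conf a b C). (\<Gamma>(b \<mapsto> ActorRef A)) x = ((\<Gamma> \<circ> swap_atom a b)(b \<mapsto> ActorRef A)) x"
  proof
    fix x assume "x \<in> fn_conf (swap_conf a b C)"
    then obtain y where y: "y \<in> fn_conf C" "x = swap_atom a b y" by (auto simp: fn_swap)
    show "(\<Gamma>(b \<mapsto> ActorRef A)) x = ((\<Gamma> \<circ> swap_atom a b)(b \<mapsto> ActorRef A)) x"
    proof (cases "x = b")
      case False
      then have "y \<noteq> a" using y by (auto simp: swap_atom_def)
      moreover have "y \<noteq> b" using y bC by auto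
      ultimately show ?thesis using y False by (auto simp: swap_atom_def)
    qed simp
  qed
  have "cfgtyp (\<Gamma>(b \<mapsto> ActorRef A)) (\<Delta>(b \<mapsto> A)) (swap_conf a b C)"
    using cfg_agree[OF t2 agree] D by (simp add: fun_upd_def)
  then show ?thesis using bD by (auto simp: cfg_Nu_iff)
qed

lemma alpha_bwd:
  assumes b: "b \<notin> fn_conf (Nu a C)" and t: "cfgtyp \<Gamma> \<Delta> (Nu b (swap_conf a b C))"
  shows "cfgtyp \<Gamma> \<Delta> (Nu a C)"
proof (cases "a = b")
  case True then show ?thesis using t by simp
next
  case False
  have "a \<notin> fn_conf (Nu b (swap_conf a b C))"
    using b False by (auto simp: fn_swap swap_atom_def split: if_splits)
  from alpha_fwd[OF this t] show ?thesis by (simp add: swap_conf_sym)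
qed

lemma extr_fwd:
  assumes a: "a \<notin> fn_conf C" and t: "cfgtyp \<Gamma> \<Delta> (Par C (Nu a D))"
  shows "cfgtyp \<Gamma> \<Delta> (Nu a (Par C D))"
proof -
  from t obtain \<Delta>1 \<Delta>2 A where d: "\<Delta> = \<Delta>1 ++ \<Delta>2" "dom \<Delta>1 \<inter> dom \<Delta>2 = {}"
    and tC: "cfgtyp \<Gamma> \<Delta>1 C" and a2: "a \<notin> dom \<Delta>2"
    and tD: "cfgtyp (\<Gamma>(a \<mapsto> ActorRef A)) (\<Delta>2(a \<mapsto> A)) D"
    by (auto simp: cfg_Par_iff cfg_Nu_iff)
  have a1: "a \<notin> dom \<Delta>1" using cfg_dom[OF tC] a by auto
  have tC': "cfgtyp (\<Gamma>(a \<mapsto> ActorRef A)) \<Delta>1 C" using cfg_agree[OF tC] a by auto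
  have "cfgtyp (\<Gamma>(a \<mapsto> ActorRef A)) (\<Delta>1 ++ \<Delta>2(a \<mapsto> A)) (Par C D)"
    using tC' tD d(2) a1 by (intro cfgtyp.T_Par) auto
  then have "cfgtyp (\<Gamma>(a \<mapsto> ActorRef A)) (\<Delta>(a \<mapsto> A)) (Par C D)" using d by simp
  moreover have "a \<notin> dom \<Delta>" using d a1 a2 by auto
  ultimately show ?thesis by (auto simp: cfg_Nu_iff)
qed

lemma extr_bwd:
  assumes a: "a \<notin> fn_conf C" and t: "cfgtyp \<Gamma> \<Delta> (Nu a (Par C D))"
  shows "cfgtyp \<Gamma> \<Delta> (Par C (Nu a D))"
proof -
  from t obtain A \<Delta>1 \<Delta>2 where aD: "a \<notin> dom \<Delta>" and d: "\<Delta>(a \<mapsto> A) = \<Delta>1 ++ \<Delta>2" "dom \<Delta>1 \<inter> dom \<Delta>2 = {}"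
    and tC: "cfgtyp (\<Gamma>(a \<mapsto> ActorRef A)) \<Delta>1 C"
    and tD: "cfgtyp (\<Gamma>(a \<mapsto> ActorRef A)) \<Delta>2 D"
    by (auto simp: cfg_Par_iff cfg_Nu_iff)
  have a1: "a \<notin> dom \<Delta>1" using cfg_dom[OF tC] a by auto
  have tC': "cfgtyp \<Gamma> \<Delta>1 C" using cfg_agree[OF tC] a by auto
  have "(\<Delta>1 ++ \<Delta>2) a = Some A" using d(1)[symmetric] by simp
  then have a2: "\<Delta>2 a = Some A" using a1 by (auto simp: map_add_def dom_def split: option.splits)
  define \<Delta>2' where "\<Delta>2' = \<Delta>2(a := None)"
  have e2: "\<Delta>2 = \<Delta>2'(a \<mapsto> A)" using a2 by (auto simp: \<Delta>2'_def fun_eq_iff)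
  have a2': "a \<notin> dom \<Delta>2'" by (simp add: \<Delta>2'_def)
  have eD: "\<Delta> = \<Delta>1 ++ \<Delta>2'"
  proof
    fix x show "\<Delta> x = (\<Delta>1 ++ \<Delta>2') x"
    proof (cases "x = a")
      case True then show ?thesis using aD a1 a2' by (auto simp: map_add_def dom_def split: option.splits)
    next
      case False
      have "(\<Delta>(a \<mapsto> A)) x = (\<Delta>1 ++ \<Delta>2) x" using d(1) by simp
      then show ?thesis using False e2 by (simp add: map_add_def split: option.splits)
    qed
  qed
  have "cfgtyp \<Gamma> \<Delta>2' (Nu a D)" using tD a2' e2 by (auto simp: cfg_Nu_iff)
  then show ?thesis using tC' eD d(2) e2 by (auto simp: cfg_Par_iff)
qed

lemma scong_typ: "scong C D \<Longrightarrow> cfgtyp \<Gamma> \<Delta> C = cfgtyp \<Gamma> \<Delta> D"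
proof (induct arbitrary: \<Gamma> \<Delta> rule: scong.induct)
  case (S_ParCtx C D E)
  then show ?case by (simp add: cfg_Par_iff)
next
  case (S_NuCtx C D a)
  then show ?case by (simp only: cfg_Nu_iff S_NuCtx(2))
next
  case (S_comm C D)
  then show ?case by (auto simp: cfg_Par_iff) (metis inf_commute map_add_comm)+
next
  case (S_assoc C D E)
  show ?case
  proof
    assume "cfgtyp \<Gamma> \<Delta> (Par C (Par D E))"
    then obtain d1 d2 d3 where "\<Delta> = d1 ++ (d2 ++ d3)" "dom d1 \<inter> (dom d2 \<union> dom d3) = {}"
      "dom d2 \<inter> dom d3 = {}" "cfgtyp \<Gamma> d1 C" "cfgtyp \<Gamma> d2 D" "cfgtyp \<Gamma> d3 E"
      by (force simp: cfg_Par_iff Int_Un_distrib Int_Un_distrib2)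
    then show "cfgtyp \<Gamma> \<Delta> (Par (Par C D) E)"
      using cfgtyp.T_Par[OF cfgtyp.T_Par[of \<Gamma> d1 C d2 D] , of d3 E] by auto
  next
    assume "cfgtyp \<Gamma> \<Delta> (Par (Par C D) E)"
    then obtain d1 d2 d3 where "\<Delta> = (d1 ++ d2) ++ d3" "(dom d1 \<union> dom d2) \<inter> dom d3 = {}"
      "dom d1 \<inter> dom d2 = {}" "cfgtyp \<Gamma> d1 C" "cfgtyp \<Gamma> d2 D" "cfgtyp \<Gamma> d3 E"
      by (force simp: cfg_Par_iff Int_Un_distrib Int_Un_distrib2)
    then show "cfgtyp \<Gamma> \<Delta> (Par C (Par D E))"
      using cfgtyp.T_Par[of \<Gamma> d1 C "d2 ++ d3" "Par D E", OF _ cfgtyp.T_Par[of \<Gamma> d2 D d3 E]] by auto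
  qed
next
  case (S_extr a C D)
  then show ?case using extr_fwd extr_bwd by blast
next
  case (S_alpha b a C)
  then show ?case using alpha_fwd alpha_bwd by blast
qed auto


section \<open>Progress\<close>

definition actorctx :: "(atom \<rightharpoonup> ty) \<Rightarrow> bool" where
  "actorctx \<Gamma> = (\<forall>x T. \<Gamma> x = Some T \<longrightarrow> (\<exists>A. T = ActorRef A))"

lemma vtyp_fun: "vtyp \<Gamma> V (TFun A C B) \<Longrightarrow> actorctx \<Gamma> \<Longrightarrow> \<exists>M. V = Lam M"
  by (cases rule: vtyp.cases) (auto simp: actorctx_def)

lemma vtyp_ref: "vtyp \<Gamma> V (ActorRef A) \<Longrightarrow> \<exists>b. V = FVar b \<and> b \<in> dom \<Gamma>"
  by (cases rule: vtyp.cases) auto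

definition goodish :: "(atom \<rightharpoonup> ty) \<Rightarrow> comp \<Rightarrow> bool" where
  "goodish \<Gamma> M = ((\<exists>W. M = Return W) \<or> (\<exists>E. M = plug E Receive) \<or> (\<exists>E. M = plug E Self)
     \<or> (\<exists>E N. M = plug E (Spawn N)) \<or> (\<exists>E V b. M = plug E (Send V (FVar b)) \<and> b \<in> dom \<Gamma>)
     \<or> (\<exists>M'. mred M M'))"

lemma local_progress_aux:
  "vtyp \<Gamma> V T \<Longrightarrow> True"
  "ctyp \<Gamma> C M T \<Longrightarrow> actorctx \<Gamma> \<Longrightarrow> goodish \<Gamma> M"
proof (induct rule: vtyp_ctyp.inducts)
  case (T_App \<Gamma> V A C B W)
  then obtain N where "V = Lam N" using vtyp_fun by blast
  then show ?case unfolding goodish_def by (blast intro: mred.intros)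
next
  case (T_Let \<Gamma> C M A L N B)
  have g: "goodish \<Gamma> M" using T_Let by blast
  have ctx: "\<And>E X. Let (plug E X) N = plug (ELet E N) X" by simp
  have mr: "\<And>M'. mred M M' \<Longrightarrow> mred (Let M N) (Let M' N)"
    using mred.M_Ctx[of _ _ "ELet Hole N"] by simp
  from g show ?case unfolding goodish_def
    by (elim disjE exE conjE) (metis ctx mr mred.M_Let)+
next
  case (T_Send \<Gamma> V A W C)
  then obtain b where "W = FVar b" "b \<in> dom \<Gamma>" using vtyp_ref by blast
  then show ?case unfolding goodish_def by (metis plug.simps(1))
qed (auto simp: goodish_def, (metis plug.simps(1))+)


lemma nu_list_typ: "cfgtyp \<Gamma> \<Delta> (nu_list as C) \<Longrightarrow>
  \<exists>\<Gamma>' \<Delta>'. cfgtyp \<Gamma>' \<Delta>' C \<and> (\<forall>x T. \<Gamma>' x = Some T \<longrightarrow> \<Gamma> x = Some T \<or> (x \<in> set as \<and> (\<exists>A. T = ActorRef A)))"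
proof (induct as arbitrary: \<Gamma> \<Delta>)
  case Nil then show ?case by auto
next
  case (Cons a as)
  then obtain A where "cfgtyp (\<Gamma>(a \<mapsto> ActorRef A)) (\<Delta>(a \<mapsto> A)) (nu_list as C)"
    by (auto simp: cfg_Nu_iff)
  from Cons(1)[OF this] obtain \<Gamma>' \<Delta>' where "cfgtyp \<Gamma>' \<Delta>' C"
    "\<forall>x T. \<Gamma>' x = Some T \<longrightarrow> (\<Gamma>(a \<mapsto> ActorRef A)) x = Some T \<or> (x \<in> set as \<and> (\<exists>A. T = ActorRef A))"
    by blast
  then show ?case by (rule_tac x=\<Gamma>' in exI, rule_tac x=\<Delta>' in exI) (auto split: if_splits)
qed

lemma par_actors_typ: "xs \<noteq> [] \<Longrightarrow> cfgtyp \<Gamma> \<Delta> (par_actors xs) \<Longrightarrow> (a, M, Vs) \<in> set xs \<Longrightarrow>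
  \<exists>A. \<Gamma> a = Some (ActorRef A) \<and> ctyp \<Gamma> A M TUnit \<and> (\<forall>V\<in>set Vs. vtyp \<Gamma> V A)"
proof (induct xs arbitrary: \<Delta> rule: par_actors.induct)
  case 1 then show ?case by simp
next
  case (2 a' M' Vs')
  then show ?case by (auto simp: cfg_Actor_iff)
next
  case (3 a' M' Vs' y zs)
  from 3(3) obtain \<Delta>1 \<Delta>2 where "cfgtyp \<Gamma> \<Delta>1 (Actor a' M' Vs')" "cfgtyp \<Gamma> \<Delta>2 (par_actors (y # zs))"
    by (auto simp: cfg_Par_iff)
  then show ?case using 3(1)[of \<Delta>2] 3(4) by (auto simp: cfg_Actor_iff)
qed

lemma red_nu_list: "red C C' \<Longrightarrow> red (nu_list as C) (nu_list as C')"
  by (induct as) (auto intro: red.R_NuCtx)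

declare S_trans[trans]

lemma scong_ParR: "scong C D \<Longrightarrow> scong (Par E C) (Par E D)"
proof -
  assume "scong C D"
  have "scong (Par E C) (Par C E)" by (rule S_comm)
  also have "scong (Par C E) (Par D E)" using \<open>scong C D\<close> by (rule S_ParCtx)
  also have "scong (Par D E) (Par E D)" by (rule S_comm)
  finally show ?thesis .
qed

lemma scong_swap3: "scong (Par A (Par P R)) (Par P (Par A R))"
proof -
  have "scong (Par A (Par P R)) (Par (Par A P) R)" by (rule S_assoc)
  also have "scong \<dots> (Par (Par P A) R)" by (intro S_ParCtx S_comm)
  also have "scong \<dots> (Par P (Par A R))" by (rule S_sym, rule S_assoc)
  finally show ?thesis .
qed

lemma pick_one: "x \<in> set xs \<Longrightarrow> scong (par_actors xs) (par_actors [x]) \<or> (\<exists>R. scong (par_actors xs) (Par (par_actors [x]) R))"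
proof (induct xs rule: par_actors.induct)
  case 1 then show ?case by simp
next
  case (2 a M Vs) then show ?case by (auto intro: S_refl)
next
  case (3 a M Vs y zs)
  show ?case
  proof (cases "x = (a, M, Vs)")
    case True then show ?thesis by (auto intro: S_refl)
  next
    case False
    then have "x \<in> set (y # zs)" using 3 by auto
    from 3(1)[OF this] show ?thesis
    proof
      assume "scong (par_actors (y # zs)) (par_actors [x])"
      then have "scong (par_actors ((a, M, Vs) # y # zs)) (Par (par_actors [x]) (Actor a M Vs))"
        by (simp) (rule S_trans[OF scong_ParR S_comm])
      then show ?thesis by blast
    next
      assume "\<exists>R. scong (par_actors (y # zs)) (Par (par_actors [x]) R)"
      then obtain R where "scong (par_actors (y # zs)) (Par (par_actors [x]) R)" by blast
      then have "scong (par_actors ((a, M, Vs) # y # zs)) (Par (par_actors [x]) (Par (Actor a M Vs) R))"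
        by (simp) (rule S_trans[OF scong_ParR scong_swap3])
      then show ?thesis by blast
    qed
  qed
qed

lemma pick_two: "x \<in> set xs \<Longrightarrow> y \<in> set xs \<Longrightarrow> x \<noteq> y \<Longrightarrow>
  scong (par_actors xs) (Par (par_actors [x]) (par_actors [y])) \<or>
  (\<exists>R. scong (par_actors xs) (Par (Par (par_actors [x]) (par_actors [y])) R))"
proof (induct xs rule: par_actors.induct)
  case 1 then show ?case by simp
next
  case (2 a M Vs) then show ?case by auto
next
  case (3 a M Vs z zs)
  let ?X = "par_actors [x]" and ?Y = "par_actors [y]" and ?A = "Actor a M Vs" and ?r = "par_actors (z # zs)"
  have pa: "par_actors ((a, M, Vs) # z # zs) = Par ?A ?r" by simp
  show ?case
  proof (cases "x = (a, M, Vs)")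
    case True
    then have xa: "?X = ?A" by simp
    have "y \<in> set (z # zs)" using 3 True by auto
    from pick_one[OF this] show ?thesis
    proof
      assume "scong ?r ?Y" then show ?thesis unfolding pa xa using scong_ParR by blast
    next
      assume "\<exists>R. scong ?r (Par ?Y R)"
      then obtain R where "scong ?r (Par ?Y R)" by blast
      then have "scong (Par ?A ?r) (Par (Par ?A ?Y) R)" by (rule S_trans[OF scong_ParR S_assoc])
      then show ?thesis unfolding pa xa by blast
    qed
  next
    case False
    note xne = False
    show ?thesis
    proof (cases "y = (a, M, Vs)")
      case True
      then have ya: "?Y = ?A" by simp
      have "x \<in> set (z # zs)" using 3 xne by auto
      from pick_one[OF this] show ?thesis
      proof
        assume "scong ?r ?X"
        then have "scong (Par ?A ?r) (Par ?X ?A)" by (rule S_trans[OF scong_ParR S_comm])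
        then show ?thesis unfolding pa ya by blast
      next
        assume "\<exists>R. scong ?r (Par ?X R)"
        then obtain R where "scong ?r (Par ?X R)" by blast
        then have "scong (Par ?A ?r) (Par (Par ?A ?X) R)" by (rule S_trans[OF scong_ParR S_assoc])
        then have "scong (Par ?A ?r) (Par (Par ?X ?A) R)" by (rule S_trans[OF _ S_ParCtx[OF S_comm]])
        then show ?thesis unfolding pa ya by blast
      qed
    next
      case False
      have "x \<in> set (z # zs)" "y \<in> set (z # zs)" using 3 False xne by auto
      from 3(1)[OF this 3(4)] show ?thesis
      proof
        assume "scong ?r (Par ?X ?Y)"
        then have "scong (Par ?A ?r) (Par (Par ?X ?Y) ?A)" by (rule S_trans[OF scong_ParR S_comm])
        then show ?thesis unfolding pa by blast
      next
        assume "\<exists>R. scong ?r (Par (Par ?X ?Y) R)"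
        then obtain R where "scong ?r (Par (Par ?X ?Y) R)" by blast
        then have "scong (Par ?A ?r) (Par (Par ?X ?Y) (Par ?A R))" by (rule S_trans[OF scong_ParR scong_swap3])
        then show ?thesis unfolding pa by blast
      qed
    qed
  qed
qed

lemma red_scong: "red C1 C2 \<Longrightarrow> scong C C1 \<Longrightarrow> \<exists>C'. red C C'"
  using R_Cong[OF _ _ S_refl] by blast

lemma reducible_single: "x \<in> set xs \<Longrightarrow> red (par_actors [x]) C' \<Longrightarrow> \<exists>C''. red (par_actors xs) C''"
proof -
  assume x: "x \<in> set xs" and r: "red (par_actors [x]) C'"
  from pick_one[OF x] show ?thesis
  proof
    assume "scong (par_actors xs) (par_actors [x])" then show ?thesis using red_scong[OF r] by blast
  next
    assume "\<exists>R. scong (par_actors xs) (Par (par_actors [x]) R)"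
    then obtain R where "scong (par_actors xs) (Par (par_actors [x]) R)" by blast
    then show ?thesis using red_scong[OF R_ParCtx[OF r]] by blast
  qed
qed

lemma reducible_pair: "x \<in> set xs \<Longrightarrow> y \<in> set xs \<Longrightarrow> x \<noteq> y \<Longrightarrow>
  red (Par (par_actors [x]) (par_actors [y])) C' \<Longrightarrow> \<exists>C''. red (par_actors xs) C''"
proof -
  assume x: "x \<in> set xs" "y \<in> set xs" "x \<noteq> y" and r: "red (Par (par_actors [x]) (par_actors [y])) C'"
  from pick_two[OF x] show ?thesis
  proof
    assume "scong (par_actors xs) (Par (par_actors [x]) (par_actors [y]))" then show ?thesis using red_scong[OF r] by blast
  next
    assume "\<exists>R. scong (par_actors xs) (Par (Par (par_actors [x]) (par_actors [y])) R)"
    then obtain R where "scong (par_actors xs) (Par (Par (par_actors [x]) (par_actors [y])) R)" by blast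
    then show ?thesis using red_scong[OF R_ParCtx[OF r]] by blast
  qed
qed


lemma par_reduces:
  assumes p: "(a, M, Vs) \<in> set acts"
    and ty: "cfgtyp \<Gamma> \<Delta> (par_actors acts)"
    and ne: "acts \<noteq> []"
    and ctx: "\<forall>x T. \<Gamma> x = Some T \<longrightarrow> x \<in> set (map fst acts) \<and> (\<exists>A. T = ActorRef A)"
    and bad: "\<not> ((\<exists>W. M = Return W) \<or> (\<exists>E. M = plug E Receive \<and> Vs = []))"
  shows "\<exists>C''. red (par_actors acts) C''"
proof -
  from par_actors_typ[OF ne ty p] obtain A where tM: "ctyp \<Gamma> A M TUnit" by blast
  have ac: "actorctx \<Gamma>" using ctx by (auto simp: actorctx_def)
  have g: "goodish \<Gamma> M" using local_progress_aux(2)[OF tM ac] .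
  have single: "\<And>C'. red (Actor a M Vs) C' \<Longrightarrow> \<exists>C''. red (par_actors acts) C''"
  proof -
    fix C' assume "red (Actor a M Vs) C'"
    then have "red (par_actors [(a, M, Vs)]) C'" by (simp only: par_actors.simps)
    then show "\<exists>C''. red (par_actors acts) C''" by (rule reducible_single[OF p])
  qed
  from g[unfolded goodish_def] show ?thesis
  proof (elim disjE)
    assume "\<exists>W. M = Return W" then show ?thesis using bad by blast
  next
    assume "\<exists>E. M = plug E Receive"
    then obtain E where M: "M = plug E Receive" by blast
    then obtain W Vs' where Vs: "Vs = W # Vs'" using bad by (cases Vs) auto
    have "red (Actor a M Vs) (Actor a (plug E (Return W)) Vs')" unfolding M Vs by (rule R_Receive)
    then show ?thesis by (rule single)
  next
    assume "\<exists>E. M = plug E Self"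
    then obtain E where M: "M = plug E Self" by blast
    have "red (Actor a M Vs) (Actor a (plug E (Return (FVar a))) Vs)" unfolding M by (rule R_Self)
    then show ?thesis by (rule single)
  next
    assume "\<exists>E N. M = plug E (Spawn N)"
    then obtain E N where M: "M = plug E (Spawn N)" by blast
    define S where "S = {a} \<union> fv_comp M \<union> (\<Union>V\<in>set Vs. fv_val V)"
    have "finite S" unfolding S_def by (simp add: fv_finite)
    from ex_new_if_finite[OF infinite_UNIV_nat this] obtain b where bS: "b \<notin> S" by (elim exE)
    then have b: "b \<noteq> a" "b \<notin> fv_comp (plug E (Spawn N))" "b \<notin> (\<Union>V\<in>set Vs. fv_val V)"
      unfolding S_def M by auto
    have "red (Actor a (plug E (Spawn N)) Vs) (Nu b (Par (Actor a (plug E (Return (FVar b))) Vs) (Actor b N [])))"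
      using b by (rule R_Spawn)
    then show ?thesis unfolding M[symmetric] by (rule single)
  next
    assume "\<exists>E V b. M = plug E (Send V (FVar b)) \<and> b \<in> dom \<Gamma>"
    then obtain E V b where M: "M = plug E (Send V (FVar b))" and b: "b \<in> dom \<Gamma>" by blast
    show ?thesis
    proof (cases "b = a")
      case True
      have "red (Actor a M Vs) (Actor a (plug E (Return UnitV)) (Vs @ [V]))"
        unfolding M True by (rule R_SendSelf)
      then show ?thesis by (rule single)
    next
      case False
      from b obtain T where "\<Gamma> b = Some T" by auto
      then have "b \<in> set (map fst acts)" using ctx by blast
      then obtain q where qin: "q \<in> set acts" and qb: "fst q = b" by auto
      obtain x Mq Wq where qe: "q = (x, Mq, Wq)" by (rule prod_cases3)
      have q: "(b, Mq, Wq) \<in> set acts" using qin qb qe by simp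
      have "(a, M, Vs) \<noteq> (b, Mq, Wq)" using False by simp
      moreover have "red (Par (par_actors [(a, M, Vs)]) (par_actors [(b, Mq, Wq)]))
             (Par (Actor a (plug E (Return UnitV)) Vs) (Actor b Mq (Wq @ [V])))"
        unfolding M by (simp only: par_actors.simps) (rule R_Send)
      ultimately show ?thesis by (rule reducible_pair[OF p q])
    qed
  next
    assume "\<exists>M'. mred M M'"
    then obtain M' where "mred M M'" by blast
    then have "red (Actor a M Vs) (Actor a M' Vs)" by (rule R_Term)
    then show ?thesis by (rule single)
  qed
qed

theorem theorem16:
  fixes C :: conf and acts :: "(atom \<times> comp \<times> val list) list"
  assumes "cfgtyp Map.empty Map.empty C"
    and "\<not> (\<exists>C'. red C C')"
    and "acts \<noteq> []"
    and "scong (canonical_conf acts) C"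
  shows "\<forall>(a, M, Vs) \<in> set acts.
           (\<exists>W. M = Return W) \<or> (\<exists>E. M = plug E Receive \<and> Vs = [])"
proof (rule ccontr)
  assume "\<not> ?thesis"
  then obtain a M Vs where p: "(a, M, Vs) \<in> set acts"
    and bad: "\<not> ((\<exists>W. M = Return W) \<or> (\<exists>E. M = plug E Receive \<and> Vs = []))" by blast
  have tc: "cfgtyp Map.empty Map.empty (nu_list (map fst acts) (par_actors acts))"
    using scong_typ[OF assms(4)] assms(1) by (simp add: canonical_conf_def)
  from nu_list_typ[OF tc] obtain \<Gamma> \<Delta> where ty: "cfgtyp \<Gamma> \<Delta> (par_actors acts)"
    and ctx: "\<forall>x T. \<Gamma> x = Some T \<longrightarrow> x \<in> set (map fst acts) \<and> (\<exists>A. T = ActorRef A)"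
    by auto
  obtain C'' where "red (par_actors acts) C''" using par_reduces[OF p ty assms(3) ctx bad] by blast
  then have "red (canonical_conf acts) (nu_list (map fst acts) C'')"
    unfolding canonical_conf_def by (rule red_nu_list)
  then have "red C (nu_list (map fst acts) C'')"
    by (rule R_Cong[OF S_sym[OF assms(4)] _ S_refl])
  then show False using assms(2) by blast
qed

end
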